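(* (a) For every $n\ge0$, the number of words $w\in\mathbb{P}^*$ with letter sum $n$ into which $121$ does not embed equals $\frac{n(n-1)}{2}+1$. (b) For every $n\ge1$, the number of words $w\in\mathcal{S}(121)$ with letter sum $3+n$ equals $\frac{n(n+1)(n+2)}{6}$.
   Context: $\mathbb{P}^*$ is the set of finite words over the positive integers. An embedding of $u$ into $w$ is a string of $|u|$ consecutive letters of $w$ whose $k$-th letter is $\ge$ the $k$-th letter of $u$ for every $k$. $\mathcal{S}(u)$ is the set of words $w$ admitting an embedding of $u$ such that the last $|u|$ letters of $w$ form the only embedding of $u$ into $w$. The letter sum of $w=w_1\ldots w_m$ is $\sum_k w_k$. *)

theory Defs
  imports Main
begin

definition pword :: "nat list \<Rightarrow> bool" where
  "pword w \<longleftrightarrow> (\<forall>a\<in>set w. 1 \<le> a)"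

definition embeds_at :: "nat list \<Rightarrow> nat list \<Rightarrow> nat \<Rightarrow> bool" where
  "embeds_at u w i \<longleftrightarrow> i + length u \<le> length w \<and> (\<forall>k<length u. u ! k \<le> w ! (i + k))"

definition embeds :: "nat list \<Rightarrow> nat list \<Rightarrow> bool" where
  "embeds u w \<longleftrightarrow> (\<exists>i. embeds_at u w i)"

definition S_set :: "nat list \<Rightarrow> nat list set" where
  "S_set u = {w. pword w \<and> embeds u w \<and> (\<forall>i. embeds_at u w i \<longrightarrow> i = length w - length u)}"

end

theory Submission imports Defs begin


lemma emb121: "pword w \<Longrightarrow> embeds_at [1,2,1] w i \<longleftrightarrow> i+3 \<le> length w \<and> 2 \<le> w!(i+1)"
proof -
  assume p: "pword w"
  have "(\<forall>k<3. [1,2,1::nat]!k \<le> w!(i+k)) \<longleftrightarrow> 1 \<le> w!i \<and> 2 \<le> w!(i+1) \<and> 1 \<le> w!(i+2)"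
    by (auto simp: less_Suc_eq numeral_3_eq_3)
  moreover have "i+3 \<le> length w \<Longrightarrow> 1 \<le> w!i \<and> 1 \<le> w!(i+2)"
    using p unfolding pword_def by (auto intro!: bspec[OF _ nth_mem])
  ultimately show ?thesis unfolding embeds_at_def by auto
qed

lemma dec2: "2 \<le> length w \<Longrightarrow> \<exists>a v b. w = a # v @ [b]"
  by (cases w; cases "tl w" rule: rev_exhaust) auto

lemma dec3: "3 \<le> length w \<Longrightarrow> \<exists>a v c b. w = a # v @ [c,b]"
proof (cases w)
  case (Cons a r)
  assume "3 \<le> length w"
  then obtain r' b where "r = r' @ [b]" using Cons by (cases r rule: rev_exhaust) auto
  moreover then obtain v c where "r' = v @ [c]" using Cons \<open>3 \<le> length w\<close> by (cases r' rule: rev_exhaust) auto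
  ultimately show ?thesis using Cons by auto
qed auto



definition g3 :: "nat list \<Rightarrow> nat list" where
  "g3 l = (l!0+1) # replicate (l!1) 1 @ [l!2+1]"

lemma len3: "length l = 3 \<Longrightarrow> \<exists>x y z. l = [x,y,z]"
  by (auto simp: numeral_3_eq_3 length_Suc_conv)

lemma g3_inj: "inj_on g3 {l. length l = 3 \<and> sum_list l = N}"
proof (rule inj_on_inverseI[where g = "\<lambda>w. [hd w - 1, length w - 2, last w - 1]"])
  fix l assume "l \<in> {l. length l = 3 \<and> sum_list l = N}"
  then obtain x y z where "l = [x,y,z]" using len3 by blast
  then show "[hd (g3 l) - 1, length (g3 l) - 2, last (g3 l) - 1] = l" by (simp add: g3_def)
qed

lemma rep1: "(\<And>j. j < length v \<Longrightarrow> v!j = (1::nat)) \<Longrightarrow> v = replicate (length v) 1"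
  by (simp add: list_eq_iff_nth_eq)

lemma a_img: assumes "2 \<le> n"
  shows "{w. pword w \<and> sum_list w = n \<and> \<not> embeds [1,2,1] w}
         = insert [n] (g3 ` {l. length l = 3 \<and> sum_list l = n-2})"
proof (intro equalityI subsetI)
  fix w assume "w \<in> {w. pword w \<and> sum_list w = n \<and> \<not> embeds [1,2,1] w}"
  hence p: "pword w" and s: "sum_list w = n" and ne: "\<And>i. \<not> embeds_at [1,2,1] w i"
    by (auto simp: embeds_def)
  consider "length w = 0" | "length w = 1" | "2 \<le> length w" by linarith
  then show "w \<in> insert [n] (g3 ` {l. length l = 3 \<and> sum_list l = n-2})"
  proof cases
    case 1 then show ?thesis using s assms by simp
  next
    case 2 then obtain x where "w = [x]" by (auto simp: length_Suc_conv)
    then show ?thesis using s by simp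
  next
    case 3
    then obtain a v b where w: "w = a # v @ [b]" using dec2 by blast
    have v1: "v!j = 1" if j: "j < length v" for j
    proof -
      have "v!j \<in> set v" using j by simp
      hence ge: "1 \<le> v!j" using p w by (auto simp: pword_def)
      have "\<not> 2 \<le> w!(j+1)" using ne[of j] emb121[OF p, of j] w j by auto
      hence "\<not> 2 \<le> v!j" using w j by (simp add: nth_append)
      then show ?thesis using ge by simp
    qed
    hence vr: "v = replicate (length v) 1" by (rule rep1)
    have ab: "1 \<le> a" "1 \<le> b" using p w by (auto simp: pword_def)
    have sum: "a + length v + b = n" using s w vr by (metis sum_list_replicate sum_list.Cons sum_list_append
          sum_list.Nil add.assoc add_0_right mult.right_neutral of_nat_id sum_list_simps(2))
    have "w = g3 [a-1, length v, b-1]" using w vr ab by (simp add: g3_def)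
    moreover have "[a-1, length v, b-1] \<in> {l. length l = 3 \<and> sum_list l = n-2}"
      using sum ab by simp
    ultimately show ?thesis by blast
  qed
next
  fix w assume "w \<in> insert [n] (g3 ` {l. length l = 3 \<and> sum_list l = n-2})"
  then consider "w = [n]" | l where "length l = 3" "sum_list l = n-2" "w = g3 l" by blast
  then show "w \<in> {w. pword w \<and> sum_list w = n \<and> \<not> embeds [1,2,1] w}"
  proof cases
    case 1 then show ?thesis using assms by (auto simp: pword_def embeds_def embeds_at_def)
  next
    case 2
    then obtain x y z where l: "l = [x,y,z]" using len3 by blast
    have w: "w = (x+1) # replicate y 1 @ [z+1]" using 2 l by (simp add: g3_def)
    have p: "pword w" using w by (auto simp: pword_def)
    have "sum_list w = n" using w 2 l assms by (simp add: sum_list_replicate)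
    moreover have "\<not> embeds_at [1,2,1] w i" for i
    proof
      assume "embeds_at [1,2,1] w i"
      hence "i + 3 \<le> length w" "2 \<le> w!(i+1)" using emb121[OF p] by auto
      then show False using w by (simp add: nth_append)
    qed
    ultimately show ?thesis using p by (auto simp: embeds_def)
  qed
qed



definition g4 :: "nat list \<Rightarrow> nat list" where
  "g4 l = (l!0+1) # replicate (l!1) 1 @ [l!2+2, l!3+1]"

lemma len4: "length l = 4 \<Longrightarrow> \<exists>x y z t. l = [x,y,z,t]"
  by (auto simp: numeral_eq_Suc length_Suc_conv)

lemma g4_inj: "inj_on g4 {l. length l = 4 \<and> sum_list l = N}"
proof (rule inj_on_inverseI[where g = "\<lambda>w. [hd w - 1, length w - 3, last (butlast w) - 2, last w - 1]"])
  fix l assume "l \<in> {l. length l = 4 \<and> sum_list l = N}"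
  then obtain x y z t where "l = [x,y,z,t]" using len4 by blast
  then show "[hd (g4 l) - 1, length (g4 l) - 3, last (butlast (g4 l)) - 2, last (g4 l) - 1] = l"
    by (simp add: g4_def butlast_append)
qed

lemma b_img: assumes "1 \<le> n"
  shows "{w \<in> S_set [1,2,1]. sum_list w = 3 + n}
         = g4 ` {l. length l = 4 \<and> sum_list l = n-1}"
proof (intro equalityI subsetI)
  fix w assume "w \<in> {w \<in> S_set [1,2,1]. sum_list w = 3 + n}"
  hence p: "pword w" and s: "sum_list w = 3 + n" and e: "embeds [1,2,1] w"
    and u: "\<And>i. embeds_at [1,2,1] w i \<Longrightarrow> i = length w - 3"
    by (auto simp: S_set_def)
  obtain i where ei: "embeds_at [1,2,1] w i" using e by (auto simp: embeds_def)
  have i3: "i + 3 \<le> length w" "2 \<le> w!(i+1)" using ei emb121[OF p] by auto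
  have ii: "i = length w - 3" using u ei by blast
  have "3 \<le> length w" using i3 by simp
  then obtain a v c b where w: "w = a # v @ [c,b]" using dec3 by blast
  have iv: "i = length v" using ii w by simp
  have c2: "2 \<le> c" using i3 w iv by (simp add: nth_append)
  have v1: "v!j = 1" if j: "j < length v" for j
  proof -
    have "v!j \<in> set v" using j by simp
    hence ge: "1 \<le> v!j" using p w by (auto simp: pword_def)
    have "\<not> embeds_at [1,2,1] w j" using u[of j] w j by auto
    hence "\<not> 2 \<le> w!(j+1)" using emb121[OF p, of j] w j by auto
    hence "\<not> 2 \<le> v!j" using w j by (simp add: nth_append)
    then show ?thesis using ge by simp
  qed
  hence vr: "v = replicate (length v) 1" by (rule rep1)
  have ab: "1 \<le> a" "1 \<le> b" using p w by (auto simp: pword_def)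
  have sum: "a + length v + c + b = 3 + n" using s w vr
    by (metis sum_list_replicate sum_list.Cons sum_list_append
          sum_list.Nil add.assoc add_0_right mult.right_neutral of_nat_id)
  have "w = g4 [a-1, length v, c-2, b-1]" using w vr ab c2 by (simp add: g4_def)
  moreover have "[a-1, length v, c-2, b-1] \<in> {l. length l = 4 \<and> sum_list l = n-1}"
    using sum ab c2 by simp
  ultimately show "w \<in> g4 ` {l. length l = 4 \<and> sum_list l = n-1}" by blast
next
  fix w assume "w \<in> g4 ` {l. length l = 4 \<and> sum_list l = n-1}"
  then obtain l where l4: "length l = 4" "sum_list l = n-1" "w = g4 l" by blast
  then obtain x y z t where l: "l = [x,y,z,t]" using len4 by blast
  have w: "w = (x+1) # replicate y 1 @ [z+2,t+1]" using l4 l by (simp add: g4_def)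
  have p: "pword w" using w by (auto simp: pword_def)
  have "sum_list w = 3 + n" using w l4 l assms by (simp add: sum_list_replicate)
  moreover have "embeds_at [1,2,1] w y" using emb121[OF p] w by (simp add: nth_append)
  moreover have "i = length w - length [1,2,1::nat]" if "embeds_at [1,2,1] w i" for i
  proof -
    have "i + 3 \<le> length w" "2 \<le> w!(i+1)" using that emb121[OF p] by auto
    moreover have "\<not> i < y"
    proof
      assume "i < y" then have "w!(i+1) = 1" using w by (simp add: nth_append)
      then show False using \<open>2 \<le> w!(i+1)\<close> by simp
    qed
    ultimately show ?thesis using w by simp
  qed
  ultimately show "w \<in> {w \<in> S_set [1,2,1]. sum_list w = 3 + n}"
    using p unfolding S_set_def embeds_def by blast
qed

lemma choose3: "(m + 3 choose 3) * 6 = (m+3)*(m+2)*(m+1)"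
proof -
  have "fact 3 * fact m * (m + 3 choose 3) = (fact (m+3) :: nat)"
    using binomial_fact_lemma[of 3 "m+3"] by simp
  moreover have "fact (m+3) = (m+3)*(m+2)*(m+1) * (fact m :: nat)"
  proof -
    have "fact (Suc (Suc (Suc m))) = Suc (Suc (Suc m)) * (Suc (Suc m) * (Suc m * (fact m :: nat)))"
      by (simp only: fact_Suc of_nat_id)
    moreover have e: "m+3 = Suc (Suc (Suc m))" by simp
    moreover have e2: "m+2 = Suc (Suc m)" "m+1 = Suc m" by simp_all
    ultimately show ?thesis by (simp only: e e2 mult.assoc)
  qed
  moreover have "fact 3 = (6::nat)" by (simp add: numeral_eq_Suc fact_Suc)
  ultimately have "fact m * ((m + 3 choose 3) * 6) = fact m * ((m+3)*(m+2)*(m+1))"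
    by (simp add: algebra_simps)
  then show ?thesis by (simp del: mult_cancel_left add: mult_left_cancel[of "fact m"])
qed



lemma pw0: "pword w \<Longrightarrow> sum_list w = 0 \<Longrightarrow> w = []"
  by (cases w) (auto simp: pword_def)

lemma pw1: "pword w \<Longrightarrow> sum_list w = 1 \<Longrightarrow> w = [1]"
proof (cases w)
  case (Cons x r)
  assume p: "pword w" and s: "sum_list w = 1"
  have "1 \<le> x" "pword r" using p Cons by (auto simp: pword_def)
  then have "x = 1" "sum_list r = 0" using s Cons by (simp_all del: sum_list_eq_0_iff)
  then show ?thesis using pw0[OF \<open>pword r\<close>] Cons by simp
qed auto

lemma partA: "card {w. pword w \<and> sum_list w = n \<and> \<not> embeds [1,2,1] w} = n * (n - 1) div 2 + 1"
proof -
  consider "n = 0" | "n = 1" | "2 \<le> n" by linarith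
  then show ?thesis
  proof cases
    case 1
    have "{w. pword w \<and> sum_list w = n \<and> \<not> embeds [1,2,1] w} = {[]}"
      using 1 pw0 by (auto simp: pword_def embeds_def embeds_at_def)
    then show ?thesis using 1 by simp
  next
    case 2
    have "{w. pword w \<and> sum_list w = n \<and> \<not> embeds [1,2,1] w} = {[1]}"
      using 2 pw1 by (auto simp: pword_def embeds_def embeds_at_def)
    then show ?thesis using 2 by simp
  next
    case 3
    let ?L = "{l. length l = 3 \<and> sum_list l = n-2}"
    have cL: "card ?L = n choose 2"
      using card_length_sum_list[of 3 "n-2"] 3 binomial_symmetric[of 2 n] by simp
    have fin: "finite ?L" using cL 3
      by (metis card.infinite zero_less_binomial_iff not_numeral_le_zero le_trans gr_implies_not0 less_le_trans zero_less_numeral zero_less_iff_neq_zero)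
    have ci: "card (g3 ` ?L) = n choose 2" using card_image[OF g3_inj] cL by simp
    have "[n] \<notin> g3 ` ?L" by (auto simp: g3_def)
    then have "card (insert [n] (g3 ` ?L)) = Suc (n choose 2)" using fin ci by simp
    then show ?thesis using a_img[OF 3] by (simp add: choose_two)
  qed
qed

lemma partB: "1 \<le> n \<Longrightarrow> card {w \<in> S_set [1,2,1]. sum_list w = 3 + n} = n * (n + 1) * (n + 2) div 6"
proof -
  assume n: "1 \<le> n"
  then obtain m where m: "n = m + 1" by (metis add.commute le_Suc_ex)
  have "card {l::nat list. length l = 4 \<and> sum_list l = n-1} = (m+3 choose m)"
    using card_length_sum_list[of 4 m] m by (simp add: add.commute)
  also have "\<dots> = (m+3 choose 3)" using binomial_symmetric[of 3 "m+3"] by simp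
  finally have c: "card {w \<in> S_set [1,2,1]. sum_list w = 3 + n} = (m+3 choose 3)"
    using b_img[OF n] card_image[OF g4_inj] by simp
  have "(m+3 choose 3) = (m+3)*(m+2)*(m+1) div 6" using choose3[of m] by simp
  also have "\<dots> = n * (n + 1) * (n + 2) div 6" using m by (simp add: algebra_simps)
  finally show ?thesis using c by simp
qed

theorem mainTheorem13:
  shows "(\<forall>n::nat. card {w. pword w \<and> sum_list w = n \<and> \<not> embeds [1,2,1] w}
            = n * (n - 1) div 2 + 1)
       \<and> (\<forall>n::nat. 1 \<le> n \<longrightarrow> card {w \<in> S_set [1,2,1]. sum_list w = 3 + n}
            = n * (n + 1) * (n + 2) div 6)"
  using partA partB by blast


end
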